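(* Let $\Omega\subset\mathbb{R}^m$ be a bounded domain with smooth boundary and outward normal $\mathbf{n}$, $V\subseteq\mathbb{R}^n$, $F\colon V\to\mathbb{R}^n$ any function, $1\le p\le\infty$, and $Q$ a positive diagonal matrix. Define $\tilde F\colon\mathbf{Y}\to\mathbf{X}$ by $\tilde F(w)(\omega)=F(w(\omega))$. Then $M^+_{\mathbf{Y},\mathbf{X}}[\tilde F]\le M_{p,Q}[F]$.
   Context: $\mathbf{Y}$ is the set of $w=(w_1,\dots,w_n)\colon\bar\Omega\to V$ with $w_i\in C^2(\bar\Omega)$ and $\partial w_i/\partial\mathbf{n}=0$ on $\partial\Omega$; $\mathbf{X}=C(\bar\Omega,\mathbb{R}^n)$ with norm $\|w\|_{p,Q}=\big\|(q_1\|w_1\|_{L^p},\dots,q_n\|w_n\|_{L^p})^T\big\|_p$. $M^+_{\mathbf{Y},\mathbf{X}}[\tilde F]=\sup_{u\neq v\in\mathbf{Y}}\lim_{h\to0^+}\frac1h\left(\frac{\|u-v+h(\tilde F(u)-\tilde F(v))\|_{p,Q}}{\|u-v\|_{p,Q}}-1\right)$. On $\mathbb{R}^n$, $\|x\|_{p,Q}=\|Qx\|_p$ and $M_{p,Q}[F]=\lim_{h\to0^+}\sup_{x\neq y\in V}\frac1h\left(\frac{\|x-y+h(F(x)-F(y))\|_{p,Q}}{\|x-y\|_{p,Q}}-1\right)$. *)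

theory Defs
  imports "HOL-Analysis.Analysis" "HOL-Probability.Essential_Supremum"
begin

fun Ck_on :: "nat \<Rightarrow> 'a::euclidean_space set \<Rightarrow> ('a \<Rightarrow> real) \<Rightarrow> bool" where
  "Ck_on 0 S f = continuous_on S f"
| "Ck_on (Suc k) S f = ((\<forall>x\<in>S. f differentiable (at x)) \<and>
      (\<forall>b\<in>Basis. Ck_on k S (\<lambda>x. frechet_derivative f (at x) b)))"

definition smooth_on :: "'a::euclidean_space set \<Rightarrow> ('a \<Rightarrow> real) \<Rightarrow> bool" where
  "smooth_on S f = (\<forall>k. Ck_on k S f)"

definition grad :: "('a::euclidean_space \<Rightarrow> real) \<Rightarrow> 'a \<Rightarrow> 'a" where
  "grad f x = (\<Sum>b\<in>Basis. frechet_derivative f (at x) b *\<^sub>R b)"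

definition local_defining_function :: "'a::euclidean_space set \<Rightarrow> 'a \<Rightarrow> real \<Rightarrow> ('a \<Rightarrow> real) \<Rightarrow> bool" where
  "local_defining_function \<Omega> x r \<phi> =
     (r > 0 \<and> smooth_on (ball x r) \<phi> \<and> (\<forall>y\<in>ball x r. grad \<phi> y \<noteq> 0) \<and>
      \<Omega> \<inter> ball x r = {y\<in>ball x r. \<phi> y < 0})"

definition bounded_smooth_domain :: "'a::euclidean_space set \<Rightarrow> bool" where
  "bounded_smooth_domain \<Omega> =
     (open \<Omega> \<and> connected \<Omega> \<and> \<Omega> \<noteq> {} \<and> bounded \<Omega> \<and>
      (\<forall>x\<in>frontier \<Omega>. \<exists>r \<phi>. local_defining_function \<Omega> x r \<phi>))"

definition outward_normal :: "'a::euclidean_space set \<Rightarrow> 'a \<Rightarrow> 'a" where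
  "outward_normal \<Omega> x = (SOME \<nu>. \<exists>r \<phi>. local_defining_function \<Omega> x r \<phi> \<and>
       \<nu> = (1 / norm (grad \<phi> x)) *\<^sub>R grad \<phi> x)"

(* the space Y: w : closure Omega -> V, components C^2 up to the boundary
   (restrictions of C^2 functions on an open neighbourhood of closure Omega),
   with vanishing normal derivative on the boundary *)
definition Yspace :: "'a::euclidean_space set \<Rightarrow> (real^'n) set \<Rightarrow> ('a \<Rightarrow> real^'n) set" where
  "Yspace \<Omega> V = {w. (\<forall>x\<in>closure \<Omega>. w x \<in> V) \<and>
     (\<forall>i. \<exists>U G. open U \<and> closure \<Omega> \<subseteq> U \<and> Ck_on 2 U G \<and>
        (\<forall>x\<in>closure \<Omega>. G x = w x $ i) \<and>
        (\<forall>x\<in>frontier \<Omega>. frechet_derivative G (at x) (outward_normal \<Omega> x) = 0))}"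

definition pnorm :: "ereal \<Rightarrow> real^'n \<Rightarrow> real" where
  "pnorm p x = (if p = \<infinity> then Max (range (\<lambda>i. \<bar>x $ i\<bar>))
                else (\<Sum>i\<in>UNIV. \<bar>x $ i\<bar> powr real_of_ereal p) powr (1 / real_of_ereal p))"

definition Lp_norm :: "ereal \<Rightarrow> 'a::euclidean_space set \<Rightarrow> ('a \<Rightarrow> real) \<Rightarrow> real" where
  "Lp_norm p \<Omega> f = (if p = \<infinity> then real_of_ereal (esssup (lebesgue_on \<Omega>) (\<lambda>x. ereal \<bar>f x\<bar>))
      else enn2real (\<integral>\<^sup>+ x\<in>\<Omega>. ennreal (\<bar>f x\<bar> powr real_of_ereal p) \<partial>lebesgue)
             powr (1 / real_of_ereal p))"

definition Xnorm :: "ereal \<Rightarrow> real^'n^'n \<Rightarrow> 'a::euclidean_space set \<Rightarrow> ('a \<Rightarrow> real^'n) \<Rightarrow> real" where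
  "Xnorm p Q \<Omega> w = pnorm p (\<chi> i. Q $ i $ i * Lp_norm p \<Omega> (\<lambda>\<omega>. w \<omega> $ i))"

definition M_plus_YX :: "ereal \<Rightarrow> real^'n^'n \<Rightarrow> 'a::euclidean_space set \<Rightarrow> (real^'n) set
     \<Rightarrow> (('a \<Rightarrow> real^'n) \<Rightarrow> ('a \<Rightarrow> real^'n)) \<Rightarrow> ereal" where
  "M_plus_YX p Q \<Omega> V Ft =
    (SUP uv \<in> {(u, v). u \<in> Yspace \<Omega> V \<and> v \<in> Yspace \<Omega> V \<and> (\<exists>\<omega>\<in>closure \<Omega>. u \<omega> \<noteq> v \<omega>)}.
       ereal (Lim (at_right (0::real)) (\<lambda>h.
         (Xnorm p Q \<Omega> (\<lambda>\<omega>. fst uv \<omega> - snd uv \<omega> + h *\<^sub>R (Ft (fst uv) \<omega> - Ft (snd uv) \<omega>))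
           / Xnorm p Q \<Omega> (\<lambda>\<omega>. fst uv \<omega> - snd uv \<omega>) - 1) / h)))"

definition M_pQ :: "ereal \<Rightarrow> real^'n^'n \<Rightarrow> (real^'n) set \<Rightarrow> (real^'n \<Rightarrow> real^'n) \<Rightarrow> ereal" where
  "M_pQ p Q V F = Lim (at_right (0::real)) (\<lambda>h.
     SUP xy \<in> {(x, y). x \<in> V \<and> y \<in> V \<and> x \<noteq> y}.
       ereal ((pnorm p (Q *v (fst xy - snd xy + h *\<^sub>R (F (fst xy) - F (snd xy))))
               / pnorm p (Q *v (fst xy - snd xy)) - 1) / h))"

end

theory Submission
  imports Defs
begin



lemma powr_convex0:
  fixes u v l P :: real
  assumes P: "1 \<le> P" and u: "0 \<le> u" and v: "0 \<le> v" and l: "0 \<le> l" "l \<le> 1"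
  shows "(l*u + (1-l)* v) powr P \<le> l * u powr P + (1-l) * v powr P"
proof (cases "u = 0 \<or> v = 0 \<or> l = 0 \<or> l = 1")
  case True
  have a: "t powr P \<le> t" if "0 \<le> t" "t \<le> 1" for t :: real
  proof (cases "t = 0")
    case False
    then have "t powr P \<le> t powr 1" using that P by (intro powr_mono') auto
    then show ?thesis using that by simp
  qed (simp)
  have b: "(t*w) powr P \<le> t * w powr P" if "0 \<le> t" "t \<le> 1" "0 \<le> w" for t w :: real
    using a[OF that(1,2)] that by (simp add: powr_mult mult_right_mono)
  show ?thesis using True
  proof (elim disjE)
    assume "u = 0" then show ?thesis using b[of "1-l" v] l v P by simp
  next
    assume "v = 0" then show ?thesis using b[of l u] l u P by simp
  qed (use P in auto)
next
  case False
  then have "u > 0" "v > 0" "l > 0" "l < 1" using u v l by auto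
  from powr_convex[OF P] have "convex_on {0<..} (\<lambda>x. x powr P)" .
  then have "\<forall>x\<in>{0<..}. \<forall>y\<in>{0<..}. \<forall>a\<ge>0. \<forall>b\<ge>0. a + b = 1 \<longrightarrow> (a*x + b*y) powr P \<le> a * x powr P + b * y powr P"
    unfolding convex_on_def by (simp add: mult.commute)
  then have "(l*u + (1-l) * v) powr P \<le> l * u powr P + (1-l) * v powr P"
    using \<open>u > 0\<close> \<open>v > 0\<close> l by auto
  then show ?thesis .
qed

lemma scal_mink:
  fixes s t A B P :: real
  assumes P: "1 \<le> P" and A: "0 < A" and B: "0 < B"
  shows "\<bar>s+t\<bar> powr P \<le> (A+B) powr P * (A/(A+B) * (\<bar>s\<bar> powr P / A powr P) + B/(A+B) * (\<bar>t\<bar> powr P / B powr P))"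
proof -
  define l where "l = A/(A+B)"
  have l: "0 \<le> l" "l \<le> 1" "1 - l = B/(A+B)" using A B by (auto simp: l_def field_simps)
  have eq: "\<bar>s\<bar> + \<bar>t\<bar> = (A+B) * (l * (\<bar>s\<bar>/A) + (1-l) * (\<bar>t\<bar>/B))"
  proof -
    have "(A+B) * (l * (\<bar>s\<bar>/A) + (1-l) * (\<bar>t\<bar>/B)) = (A+B) * (\<bar>s\<bar>/(A+B) + \<bar>t\<bar>/(A+B))"
    proof -
      have "(1-l) * (\<bar>t\<bar>/B) = \<bar>t\<bar>/(A+B)" unfolding l(3) using A B by simp
      moreover have "l * (\<bar>s\<bar>/A) = \<bar>s\<bar>/(A+B)" unfolding l_def using A B by simp
      ultimately show ?thesis by simp
    qed
    also have "\<dots> = \<bar>s\<bar> + \<bar>t\<bar>" using A B by (simp add: add_divide_distrib[symmetric])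
    finally show ?thesis by simp
  qed
  have "\<bar>s+t\<bar> powr P \<le> (\<bar>s\<bar> + \<bar>t\<bar>) powr P"
    using P by (intro powr_mono2) auto
  also have "\<dots> = (A+B) powr P * (l * (\<bar>s\<bar>/A) + (1-l) * (\<bar>t\<bar>/B)) powr P"
    unfolding eq using A B l by (subst powr_mult) auto
  also have "\<dots> \<le> (A+B) powr P * (l * (\<bar>s\<bar>/A) powr P + (1-l) * (\<bar>t\<bar>/B) powr P)"
    using A B l P by (intro mult_left_mono powr_convex0) auto
  also have "\<dots> = (A+B) powr P * (A/(A+B) * (\<bar>s\<bar> powr P / A powr P) + B/(A+B) * (\<bar>t\<bar> powr P / B powr P))"
    unfolding l(3) using A B by (simp add: l_def powr_divide)
  finally show ?thesis .
qed

lemma mink_real: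
  fixes X Y Z P :: real
  assumes P: "1 \<le> P" and X: "0 \<le> X" and Y: "0 \<le> Y" and Z: "0 \<le> Z"
    and H: "\<And>A B. 0 < A \<Longrightarrow> 0 < B \<Longrightarrow>
       Z \<le> (A+B) powr P * (A/(A+B) * (X / A powr P) + B/(A+B) * (Y / B powr P))"
  shows "Z powr (1/P) \<le> X powr (1/P) + Y powr (1/P)"
proof (rule field_le_epsilon)
  fix e :: real assume e: "0 < e"
  define a where "a = X powr (1/P)"
  define b where "b = Y powr (1/P)"
  have a0: "0 \<le> a" "0 \<le> b" by (auto simp: a_def b_def)
  have Xa: "X = a powr P" using X P by (simp add: a_def powr_powr)
  have Yb: "Y = b powr P" using Y P by (simp add: b_def powr_powr)
  have A: "0 < a + e/2" "0 < b + e/2" using a0 e by auto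
  have x1: "X / (a+e/2) powr P \<le> 1"
  proof -
    have "a powr P \<le> (a+e/2) powr P" using P a0 e by (intro powr_mono2) auto
    moreover have "(a+e/2) powr P > 0" using A by simp
    ultimately show ?thesis unfolding Xa by simp
  qed
  have y1: "Y / (b+e/2) powr P \<le> 1"
  proof -
    have "b powr P \<le> (b+e/2) powr P" using P a0 e by (intro powr_mono2) auto
    moreover have "(b+e/2) powr P > 0" using A by simp
    ultimately show ?thesis unfolding Yb by simp
  qed
  have "Z \<le> (a+e/2 + (b+e/2)) powr P * ((a+e/2)/(a+e/2+(b+e/2)) * (X / (a+e/2) powr P) + (b+e/2)/(a+e/2+(b+e/2)) * (Y / (b+e/2) powr P))"
    by (rule H[OF A])
  also have "\<dots> \<le> (a+e/2 + (b+e/2)) powr P * ((a+e/2)/(a+e/2+(b+e/2)) * 1 + (b+e/2)/(a+e/2+(b+e/2)) * 1)"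
    using A x1 y1 by (intro mult_left_mono add_mono mult_left_mono) auto
  also have "\<dots> = (a+b+e) powr P"
  proof -
    have h: "a+e/2+(b+e/2) = a+b+e" by simp
    have "a+b+e > 0" using A by linarith
    then have "(a+e/2)/(a+b+e) + (b+e/2)/(a+b+e) = 1"
      by (simp add: add_divide_distrib[symmetric])
    then show ?thesis unfolding h by (simp only: mult_1_right)
  qed
  finally have "Z \<le> (a+b+e) powr P" .
  then have "Z powr (1/P) \<le> ((a+b+e) powr P) powr (1/P)"
    using Z P by (intro powr_mono2) auto
  also have "\<dots> = a+b+e" using a0 e P by (simp add: powr_powr)
  finally show "Z powr (1/P) \<le> X powr (1/P) + Y powr (1/P) + e" by (simp add: a_def b_def)
qed


lemma sum_lin_aux:
  fixes K a b c d :: real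
  shows "(\<Sum>i\<in>S. K * (a * (f i / c) + b * (g i / d))) = K * (a * (sum f S / c) + b * (sum g S / d))"
proof -
  have "(\<Sum>i\<in>S. K * (a * (f i / c) + b * (g i / d))) = (\<Sum>i\<in>S. (K*a/c) * f i + (K*b/d) * g i)"
    by (intro sum.cong) (auto simp: algebra_simps)
  also have "\<dots> = (K*a/c) * sum f S + (K*b/d) * sum g S"
    by (simp add: sum.distrib sum_distrib_left)
  also have "\<dots> = K * (a * (sum f S / c) + b * (sum g S / d))" by (simp add: algebra_simps)
  finally show ?thesis .
qed

lemma pnorm_fin: "pnorm (ereal P) x = (\<Sum>i\<in>UNIV. \<bar>x $ i\<bar> powr P) powr (1/P)"
  by (simp add: pnorm_def)

lemma pnorm_inf: "pnorm \<infinity> x = Max (range (\<lambda>i. \<bar>x $ i\<bar>))"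
  by (simp add: pnorm_def)

lemma pnorm_nonneg: "0 \<le> pnorm p x"
proof (cases "p = \<infinity>")
  case True
  obtain i :: 'a where True by simp
  have "0 \<le> \<bar>x $ i\<bar>" by simp
  also have "\<dots> \<le> Max (range (\<lambda>i. \<bar>x $ i\<bar>))" by (rule Max_ge) auto
  finally show ?thesis using True by (simp add: pnorm_def)
qed (simp add: pnorm_def)

lemma ereal_cases_p:
  assumes "1 \<le> p"
  obtains "p = \<infinity>" | P where "p = ereal P" "1 \<le> P"
  using assms by (cases p) auto

lemma pnorm_comp:
  assumes "1 \<le> p" shows "\<bar>x $ i\<bar> \<le> pnorm p x"
  using assms
proof (cases rule: ereal_cases_p)
  case 1 then show ?thesis by (simp add: pnorm_def)
next
  case (2 P)
  have "\<bar>x $ i\<bar> powr P \<le> (\<Sum>j\<in>UNIV. \<bar>x $ j\<bar> powr P)"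
    by (rule member_le_sum) auto
  then have "(\<bar>x $ i\<bar> powr P) powr (1/P) \<le> (\<Sum>j\<in>UNIV. \<bar>x $ j\<bar> powr P) powr (1/P)"
    using 2 by (intro powr_mono2) auto
  then show ?thesis using 2 by (simp add: pnorm_fin powr_powr)
qed

lemma pnorm_scale:
  assumes "1 \<le> p" shows "pnorm p (c *\<^sub>R x) = \<bar>c\<bar> * pnorm p x"
  using assms
proof (cases rule: ereal_cases_p)
  case 1
  have "Max (range (\<lambda>i. \<bar>c\<bar> * \<bar>x $ i\<bar>)) = \<bar>c\<bar> * Max (range (\<lambda>i. \<bar>x $ i\<bar>))"
  proof -
    have "range (\<lambda>i. \<bar>c\<bar> * \<bar>x $ i\<bar>) = (\<lambda>t. \<bar>c\<bar> * t) ` range (\<lambda>i. \<bar>x $ i\<bar>)" by auto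
    moreover have "mono (\<lambda>t. \<bar>c\<bar> * t)" by (rule monoI) (simp add: mult_left_mono)
    ultimately show ?thesis by (simp add: mono_Max_commute)
  qed
  then show ?thesis using 1 by (simp add: pnorm_def abs_mult)
next
  case (2 P)
  have "(\<Sum>i\<in>UNIV. \<bar>c * x $ i\<bar> powr P) = \<bar>c\<bar> powr P * (\<Sum>i\<in>UNIV. \<bar>x $ i\<bar> powr P)"
    by (simp add: abs_mult powr_mult sum_distrib_left)
  then have "(\<Sum>i\<in>UNIV. \<bar>c * x $ i\<bar> powr P) powr (1/P) = (\<bar>c\<bar> powr P) powr (1/P) * (\<Sum>i\<in>UNIV. \<bar>x $ i\<bar> powr P) powr (1/P)"
    by (simp add: powr_mult sum_nonneg)
  also have "(\<bar>c\<bar> powr P) powr (1/P) = \<bar>c\<bar>" using 2 by (simp add: powr_powr)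
  finally show ?thesis using 2 by (simp add: pnorm_fin)
qed

lemma pnorm_triangle:
  assumes "1 \<le> p" shows "pnorm p (x + y) \<le> pnorm p x + pnorm p y"
  using assms
proof (cases rule: ereal_cases_p)
  case 1
  have "\<bar>(x+y) $ i\<bar> \<le> Max (range (\<lambda>i. \<bar>x $ i\<bar>)) + Max (range (\<lambda>i. \<bar>y $ i\<bar>))" for i
  proof -
    have "\<bar>(x+y) $ i\<bar> \<le> \<bar>x $ i\<bar> + \<bar>y $ i\<bar>" by (simp add: abs_triangle_ineq)
    also have "\<dots> \<le> Max (range (\<lambda>i. \<bar>x $ i\<bar>)) + Max (range (\<lambda>i. \<bar>y $ i\<bar>))"
      by (intro add_mono Max_ge) auto
    finally show ?thesis .
  qed
  then show ?thesis using 1 by (simp add: pnorm_def Max_le_iff)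
next
  case (2 P)
  have "(\<Sum>i\<in>UNIV. \<bar>(x+y) $ i\<bar> powr P) powr (1/P) \<le> (\<Sum>i\<in>UNIV. \<bar>x $ i\<bar> powr P) powr (1/P) + (\<Sum>i\<in>UNIV. \<bar>y $ i\<bar> powr P) powr (1/P)"
  proof (rule mink_real[OF 2(2)])
    fix A B :: real assume A: "0 < A" and B: "0 < B"
    have "(\<Sum>i\<in>UNIV. \<bar>(x+y) $ i\<bar> powr P) \<le> (\<Sum>i\<in>UNIV. (A+B) powr P * (A/(A+B) * (\<bar>x $ i\<bar> powr P / A powr P) + B/(A+B) * (\<bar>y $ i\<bar> powr P / B powr P)))"
      using scal_mink[OF 2(2) A B] by (intro sum_mono) simp
    also have "\<dots> = (A+B) powr P * (A/(A+B) * ((\<Sum>i\<in>UNIV. \<bar>x $ i\<bar> powr P) / A powr P) + B/(A+B) * ((\<Sum>i\<in>UNIV. \<bar>y $ i\<bar> powr P) / B powr P))"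
      by (rule sum_lin_aux)
    finally show "(\<Sum>i\<in>UNIV. \<bar>(x+y) $ i\<bar> powr P) \<le> (A+B) powr P * (A/(A+B) * ((\<Sum>i\<in>UNIV. \<bar>x $ i\<bar> powr P) / A powr P) + B/(A+B) * ((\<Sum>i\<in>UNIV. \<bar>y $ i\<bar> powr P) / B powr P))" .
  qed (auto intro: sum_nonneg)
  then show ?thesis using 2 by (simp add: pnorm_fin)
qed

lemma open_sets_lebesgue: "open S \<Longrightarrow> S \<in> sets lebesgue"
  by (simp add: borel_open sets_completionI_sets)

lemma open_pos_measure:
  fixes S :: "'a::euclidean_space set"
  assumes "open S" "x \<in> S" shows "0 < emeasure lebesgue S"
proof -
  obtain e where e: "0 < e" "ball x e \<subseteq> S" using assms openE by blast
  then obtain a b where box: "x \<in> box a b" "box a b \<subseteq> S"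
    by (metis rational_boxes order_trans)
  then have "0 < emeasure lebesgue (box a b)"
    by (auto simp: emeasure_lborel_box_eq mem_box algebra_simps intro!: prod_pos)
  also have "\<dots> \<le> emeasure lebesgue S"
    using assms box by (auto intro!: emeasure_mono open_sets_lebesgue)
  finally show ?thesis .
qed

lemma cont_meas:
  assumes "open \<Omega>" "continuous_on (closure \<Omega>) f"
  shows "f \<in> borel_measurable (lebesgue_on \<Omega>)"
  using continuous_on_subset[OF assms(2) closure_subset] assms(1)
  by (intro continuous_imp_measurable_on_sets_lebesgue open_sets_lebesgue)

lemma cont_integrable:
  fixes f :: "'a::euclidean_space \<Rightarrow> real"
  assumes "open \<Omega>" "bounded \<Omega>" "continuous_on (closure \<Omega>) f"
  shows "integrable (lebesgue_on \<Omega>) f"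
proof -
  have fm: "finite_measure (lebesgue_on \<Omega>)"
    using assms by (intro finite_measure_lebesgue_on lmeasurable_open)
  have "compact (f ` closure \<Omega>)" using assms
    by (intro compact_continuous_image) (auto simp: compact_closure)
  then obtain B where B: "\<forall>y\<in>f ` closure \<Omega>. norm y \<le> B"
    using compact_imp_bounded bounded_iff by metis
  have "AE x in lebesgue_on \<Omega>. norm (f x) \<le> B"
    using B closure_subset by (intro AE_I2) (auto simp: space_lebesgue_on)
  then show ?thesis
    using finite_measure.integrable_const_bound[OF fm] cont_meas[OF assms(1,3)] by blast
qed

lemma pos_contra:
  fixes g :: "'a::euclidean_space \<Rightarrow> real"
  assumes "open \<Omega>" "continuous_on (closure \<Omega>) g" "\<omega>0 \<in> closure \<Omega>" "g \<omega>0 > 0"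
    and AE: "AE x in lebesgue_on \<Omega>. g x \<le> 0"
  shows False
proof -
  have "\<exists>d>0. \<forall>x'\<in>closure \<Omega>. dist x' \<omega>0 < d \<longrightarrow> dist (g x') (g \<omega>0) < g \<omega>0"
    using assms(2,3,4) unfolding continuous_on_iff by blast
  then obtain d where d: "d > 0" "\<forall>x'\<in>closure \<Omega>. dist x' \<omega>0 < d \<longrightarrow> dist (g x') (g \<omega>0) < g \<omega>0"
    by blast
  define W where "W = \<Omega> \<inter> ball \<omega>0 d"
  obtain w where "w \<in> \<Omega>" "dist w \<omega>0 < d" using assms(3) d(1) closure_approachable by blast
  then have w: "w \<in> W" by (simp add: W_def dist_commute)
  have Wo: "open W" using assms(1) by (simp add: W_def open_Int)
  have pos: "g x > 0" if "x \<in> W" for x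
  proof -
    have "x \<in> closure \<Omega>" "dist x \<omega>0 < d" using that closure_subset
      by (auto simp: W_def dist_commute)
    then have "dist (g x) (g \<omega>0) < g \<omega>0" using d by blast
    then show ?thesis by (simp add: dist_real_def)
  qed
  from AE obtain N where N: "{x \<in> space (lebesgue_on \<Omega>). \<not> g x \<le> 0} \<subseteq> N"
    "emeasure (lebesgue_on \<Omega>) N = 0" "N \<in> sets (lebesgue_on \<Omega>)"
    by (rule AE_E)
  have "W \<subseteq> N" using N(1) pos by (force simp: space_lebesgue_on W_def)
  have Wm: "W \<in> sets (lebesgue_on \<Omega>)"
  proof -
    have "W \<in> sets lebesgue" using Wo by (rule open_sets_lebesgue)
    moreover have "\<Omega> \<inter> space lebesgue \<in> sets lebesgue" using assms(1) by (simp add: open_sets_lebesgue)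
    ultimately show ?thesis by (simp add: sets_restrict_space_iff W_def)
  qed
  have "emeasure (lebesgue_on \<Omega>) W \<le> emeasure (lebesgue_on \<Omega>) N"
    using \<open>W \<subseteq> N\<close> N(3) by (rule emeasure_mono)
  moreover have "emeasure (lebesgue_on \<Omega>) W = emeasure lebesgue W"
    using assms(1) by (intro emeasure_restrict_space) (auto simp: W_def open_sets_lebesgue)
  moreover have "0 < emeasure lebesgue W" using open_pos_measure[OF Wo w] .
  ultimately show False using N(2) by simp
qed


lemma pnorm_upper:
  fixes x :: "real^'n"
  assumes "1 \<le> p" shows "pnorm p x \<le> real CARD('n) * norm x"
  using assms
proof (cases rule: ereal_cases_p)
  case 1
  have n1: "1 \<le> real CARD('n)" by simp
  have "Max (range (\<lambda>i. \<bar>x $ i\<bar>)) \<le> norm x"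
    by (simp add: Max_le_iff component_le_norm_cart)
  also have "\<dots> \<le> real CARD('n) * norm x" using n1 by (simp add: mult_le_cancel_right1)
  finally show ?thesis using 1 by (simp add: pnorm_def)
next
  case (2 P)
  have n1: "1 \<le> real CARD('n)" by simp
  have "(\<Sum>i\<in>UNIV. \<bar>x $ i\<bar> powr P) \<le> (\<Sum>i\<in>(UNIV::'n set). norm x powr P)"
    using 2 by (intro sum_mono powr_mono2) (auto simp: component_le_norm_cart)
  also have "\<dots> = real CARD('n) * norm x powr P" by simp
  finally have "(\<Sum>i\<in>UNIV. \<bar>x $ i\<bar> powr P) powr (1/P) \<le> (real CARD('n) * norm x powr P) powr (1/P)"
    using 2 by (intro powr_mono2) (auto intro: sum_nonneg)
  also have "\<dots> = real CARD('n) powr (1/P) * norm x"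
    using 2 by (simp add: powr_mult powr_powr)
  also have "\<dots> \<le> real CARD('n) * norm x"
  proof -
    have "real CARD('n) powr (1/P) \<le> real CARD('n) powr 1"
      using 2 n1 by (intro powr_mono) auto
    then show ?thesis by (simp add: mult_right_mono)
  qed
  finally show ?thesis using 2 by (simp add: pnorm_fin)
qed

lemma pnorm_lipschitz:
  fixes x y :: "real^'n"
  assumes "1 \<le> p" shows "\<bar>pnorm p x - pnorm p y\<bar> \<le> real CARD('n) * norm (x - y)"
proof -
  have "pnorm p x \<le> pnorm p y + pnorm p (x - y)"
    using pnorm_triangle[OF assms, of y "x - y"] by simp
  moreover have "pnorm p y \<le> pnorm p x + pnorm p (y - x)"
    using pnorm_triangle[OF assms, of x "y - x"] by simp
  moreover have "pnorm p (y - x) = pnorm p (x - y)"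
    using pnorm_scale[OF assms, of "-1" "x - y"] by simp
  ultimately have "\<bar>pnorm p x - pnorm p y\<bar> \<le> pnorm p (x - y)" by linarith
  also have "\<dots> \<le> real CARD('n) * norm (x - y)" by (rule pnorm_upper[OF assms])
  finally show ?thesis .
qed

lemma pnorm_continuous:
  assumes "1 \<le> p" shows "continuous_on S (pnorm p :: real^'n \<Rightarrow> real)"
proof (rule lipschitz_on_continuous_on)
  show "(real CARD('n))-lipschitz_on S (pnorm p)"
    using pnorm_lipschitz[OF assms] by (auto simp: lipschitz_on_def dist_norm)
qed

lemma diag_mult:
  assumes "\<forall>i j. i \<noteq> j \<longrightarrow> Q $ i $ j = 0"
  shows "(Q *v z) $ i = Q $ i $ i * z $ i"
proof -
  have "(\<Sum>j\<in>UNIV. Q $ i $ j * z $ j) = (\<Sum>j\<in>UNIV. if j = i then Q $ i $ i * z $ i else 0)"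
    using assms by (intro sum.cong) auto
  also have "\<dots> = Q $ i $ i * z $ i" by simp
  finally show ?thesis by (simp add: matrix_vector_mult_def)
qed



lemma mono_Lim_ereal:
  fixes f :: "real \<Rightarrow> ereal"
  assumes mono: "\<And>a b. 0 < a \<Longrightarrow> a \<le> b \<Longrightarrow> f a \<le> f b"
  shows "Lim (at_right 0) f = (INF h\<in>{0<..}. f h)"
proof (rule tendsto_Lim)
  show "at_right (0::real) \<noteq> bot" by simp
  show "(f \<longlongrightarrow> (INF h\<in>{0<..}. f h)) (at_right 0)"
  proof (rule order_tendstoI)
    fix y assume "y < (INF h\<in>{0<..}. f h)"
    then have "\<forall>h\<in>{0<..}. y < f h" by (simp add: less_INF_D)
    then show "eventually (\<lambda>x. y < f x) (at_right 0)"
      by (simp add: eventually_at_right_less eventually_at_filter) 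
  next
    fix y assume "(INF h\<in>{0<..}. f h) < y"
    then obtain h0 where h0: "h0 > 0" "f h0 < y" by (auto simp: INF_less_iff)
    have "eventually (\<lambda>x. x < h0) (at_right (0::real))"
      using h0(1) by (auto simp: eventually_at_right intro!: exI[of _ h0])
    moreover have "eventually (\<lambda>x. x > 0) (at_right (0::real))"
      by (simp add: eventually_at_right_less)
    ultimately show "eventually (\<lambda>x. f x < y) (at_right 0)"
      by eventually_elim (use mono h0 in \<open>meson le_less le_less_trans\<close>)
  qed
qed

lemma mono_Lim_real:
  fixes g :: "real \<Rightarrow> real"
  assumes mono: "\<And>a b. 0 < a \<Longrightarrow> a \<le> b \<Longrightarrow> g a \<le> g b"
    and lb: "\<And>h. 0 < h \<Longrightarrow> B \<le> g h"
  shows "Lim (at_right 0) g = Inf (g ` {0<..})" "\<And>h. 0 < h \<Longrightarrow> Inf (g ` {0<..}) \<le> g h"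
proof -
  have bdd: "bdd_below (g ` {0<..})" unfolding bdd_below_def using lb by auto
  have ne: "g ` {0<..} \<noteq> {}" by (auto intro: exI[of _ 1])
  show "\<And>h. 0 < h \<Longrightarrow> Inf (g ` {0<..}) \<le> g h"
    using bdd by (intro cInf_lower) auto
  show "Lim (at_right 0) g = Inf (g ` {0<..})"
  proof (rule tendsto_Lim)
    show "at_right (0::real) \<noteq> bot" by simp
    show "(g \<longlongrightarrow> Inf (g ` {0<..})) (at_right 0)"
    proof (rule order_tendstoI)
      fix y assume "y < Inf (g ` {0<..})"
      then have "\<forall>h\<in>{0<..}. y < g h" using bdd ne
        by (metis cInf_lower image_eqI order_less_le_trans)
      then show "eventually (\<lambda>x. y < g x) (at_right 0)"
        by (simp add: eventually_at_filter) 
    next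
      fix y assume "Inf (g ` {0<..}) < y"
      then have "\<exists>z\<in>g ` {0<..}. z < y" using ne bdd by (simp add: cInf_less_iff)
      then obtain h0 where h0: "h0 > 0" "g h0 < y" by auto
      have "eventually (\<lambda>x. x < h0) (at_right (0::real))"
        using h0(1) by (auto simp: eventually_at_right intro!: exI[of _ h0])
      moreover have "eventually (\<lambda>x. x > 0) (at_right (0::real))"
        by (simp add: eventually_at_right_less)
      ultimately show "eventually (\<lambda>x. g x < y) (at_right 0)"
        by eventually_elim (use mono h0 in \<open>meson le_less le_less_trans\<close>)
    qed
  qed
qed

lemma quot_mono:
  fixes phi :: "real \<Rightarrow> real"
  assumes conv: "\<And>t h. 0 \<le> t \<Longrightarrow> t \<le> 1 \<Longrightarrow> 0 < h \<Longrightarrow> phi (t*h) \<le> t * phi h + (1-t) * phi 0"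
    and Z: "0 < phi 0" and ab: "0 < a" "a \<le> b"
  shows "(phi a / phi 0 - 1) / a \<le> (phi b / phi 0 - 1) / b"
proof -
  have b: "0 < b" using ab by simp
  have "phi a \<le> (a/b) * phi b + (1 - a/b) * phi 0"
    using conv[of "a/b" b] ab b by simp
  then have "phi a - phi 0 \<le> (a/b) * (phi b - phi 0)" by (simp add: algebra_simps)
  then have "(phi a - phi 0) / a \<le> (phi b - phi 0) / b"
    using ab b by (simp add: field_simps)
  then have "(phi a - phi 0) / a / phi 0 \<le> (phi b - phi 0) / b / phi 0"
    using Z by (intro divide_right_mono) auto
  moreover have "(phi a / phi 0 - 1) / a = (phi a - phi 0) / a / phi 0"
    "(phi b / phi 0 - 1) / b = (phi b - phi 0) / b / phi 0"
    using Z by (simp_all add: field_simps)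
  ultimately show ?thesis by simp
qed



lemma key:
  fixes N :: "('m::euclidean_space \<Rightarrow> real^'n) \<Rightarrow> real" and nu :: "real^'n \<Rightarrow> real"
    and K :: "'m set" and V :: "(real^'n) set" and F :: "real^'n \<Rightarrow> real^'n"
    and Y :: "('m \<Rightarrow> real^'n) set"
  assumes nu_tri: "\<And>x y. nu (x+y) \<le> nu x + nu y"
    and nu_scale: "\<And>c x. nu (c *\<^sub>R x) = \<bar>c\<bar> * nu x"
    and nu_nonneg: "\<And>x. 0 \<le> nu x"
    and nu_pos: "\<And>x. x \<noteq> 0 \<Longrightarrow> 0 < nu x"
    and nu_upper: "\<And>x. nu x \<le> Cu * norm x" and Cu: "0 \<le> Cu"
    and nu_lower: "\<And>x. norm x \<le> Cl * nu x" and Cl: "0 \<le> Cl"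
    and N_tri: "\<And>c d. continuous_on K c \<Longrightarrow> continuous_on K d \<Longrightarrow> N (\<lambda>\<omega>. c \<omega> + d \<omega>) \<le> N c + N d"
    and N_dom: "\<And>c a k. continuous_on K c \<Longrightarrow> continuous_on K a \<Longrightarrow> 0 \<le> k \<Longrightarrow>
        (\<forall>\<omega>\<in>K. nu (c \<omega>) \<le> k * nu (a \<omega>)) \<Longrightarrow> N c \<le> k * N a"
    and N_pos: "\<And>a \<omega>0. continuous_on K a \<Longrightarrow> \<omega>0 \<in> K \<Longrightarrow> a \<omega>0 \<noteq> 0 \<Longrightarrow> 0 < N a"
    and Y: "\<And>u. u \<in> Y \<Longrightarrow> continuous_on K u \<and> (\<forall>\<omega>\<in>K. u \<omega> \<in> V)"
  shows "(SUP uv \<in> {(u, v). u \<in> Y \<and> v \<in> Y \<and> (\<exists>\<omega>\<in>K. u \<omega> \<noteq> v \<omega>)}.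
       ereal (Lim (at_right (0::real)) (\<lambda>h.
         (N (\<lambda>\<omega>. fst uv \<omega> - snd uv \<omega> + h *\<^sub>R (F (fst uv \<omega>) - F (snd uv \<omega>)))
           / N (\<lambda>\<omega>. fst uv \<omega> - snd uv \<omega>) - 1) / h)))
   \<le> Lim (at_right (0::real)) (\<lambda>h.
     SUP xy \<in> {(x, y). x \<in> V \<and> y \<in> V \<and> x \<noteq> y}.
       ereal ((nu (fst xy - snd xy + h *\<^sub>R (F (fst xy) - F (snd xy)))
               / nu (fst xy - snd xy) - 1) / h))"
proof -
  define Pairs where "Pairs = {(x, y). x \<in> V \<and> y \<in> V \<and> x \<noteq> y}"
  define D where "D x y h = (nu (x - y + h *\<^sub>R (F x - F y)) / nu (x - y) - 1) / h" for x y h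
  define S where "S h = (SUP xy \<in> Pairs. ereal (D (fst xy) (snd xy) h))" for h
  have nu0: "nu 0 = 0" using nu_scale[of 0 0] by simp
  have nu_neg: "nu (- x) = nu x" for x using nu_scale[of "-1" x] by simp
  have Dmono: "D x y a \<le> D x y b" if "x \<noteq> y" "0 < a" "a \<le> b" for x y a b
  proof -
    define phi where "phi h = nu (x - y + h *\<^sub>R (F x - F y))" for h
    have "(phi a / phi 0 - 1) / a \<le> (phi b / phi 0 - 1) / b"
    proof (rule quot_mono)
      show "0 < phi 0" using that nu_pos by (simp add: phi_def)
      show "0 < a" "a \<le> b" by fact+
      fix t h :: real assume t: "0 \<le> t" "t \<le> 1" and "0 < h"
      have "x - y + (t*h) *\<^sub>R (F x - F y) = t *\<^sub>R (x - y + h *\<^sub>R (F x - F y)) + (1-t) *\<^sub>R (x - y + 0 *\<^sub>R (F x - F y))"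
        by (simp add: algebra_simps)
      then have "phi (t*h) = nu (t *\<^sub>R (x - y + h *\<^sub>R (F x - F y)) + (1-t) *\<^sub>R (x - y + 0 *\<^sub>R (F x - F y)))"
        by (simp add: phi_def)
      also have "\<dots> \<le> t * phi h + (1-t) * phi 0"
        using nu_tri nu_scale t unfolding phi_def by (metis abs_of_nonneg diff_ge_0_iff_ge)
      finally show "phi (t*h) \<le> t * phi h + (1-t) * phi 0" .
    qed
    then show ?thesis by (simp add: D_def phi_def)
  qed
  have Smono: "S a \<le> S b" if "0 < a" "a \<le> b" for a b
    unfolding S_def
  proof (rule SUP_mono)
    fix xy assume "xy \<in> Pairs"
    then show "\<exists>m\<in>Pairs. ereal (D (fst xy) (snd xy) a) \<le> ereal (D (fst m) (snd m) b)"
      using Dmono[of "fst xy" "snd xy" a b] that by (auto simp: Pairs_def) blast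
  qed
  have RHS: "Lim (at_right (0::real)) (\<lambda>h.
     SUP xy \<in> {(x, y). x \<in> V \<and> y \<in> V \<and> x \<noteq> y}.
       ereal ((nu (fst xy - snd xy + h *\<^sub>R (F (fst xy) - F (snd xy)))
               / nu (fst xy - snd xy) - 1) / h)) = (INF h\<in>{0<..}. S h)"
  proof -
    have "(\<lambda>h. SUP xy \<in> {(x, y). x \<in> V \<and> y \<in> V \<and> x \<noteq> y}.
       ereal ((nu (fst xy - snd xy + h *\<^sub>R (F (fst xy) - F (snd xy)))
               / nu (fst xy - snd xy) - 1) / h)) = S"
      by (rule ext) (simp add: S_def D_def Pairs_def)
    then show ?thesis using mono_Lim_ereal[of S] Smono by simp
  qed
  have H: "ereal (Lim (at_right 0) (\<lambda>h.
         (N (\<lambda>\<omega>. fst uv \<omega> - snd uv \<omega> + h *\<^sub>R (F (fst uv \<omega>) - F (snd uv \<omega>)))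
           / N (\<lambda>\<omega>. fst uv \<omega> - snd uv \<omega>) - 1) / h)) \<le> (INF h\<in>{0<..}. S h)"
    if "uv \<in> {(u, v). u \<in> Y \<and> v \<in> Y \<and> (\<exists>\<omega>\<in>K. u \<omega> \<noteq> v \<omega>)}" for uv
  proof -
    from that obtain u v \<omega>0 where uv: "uv = (u, v)" "u \<in> Y" "v \<in> Y" "\<omega>0 \<in> K" "u \<omega>0 \<noteq> v \<omega>0" by auto
    have uc: "continuous_on K u" and uV: "\<forall>\<omega>\<in>K. u \<omega> \<in> V" using Y[OF uv(2)] by auto
    have vc: "continuous_on K v" and vV: "\<forall>\<omega>\<in>K. v \<omega> \<in> V" using Y[OF uv(3)] by auto
    define a where "a \<omega> = u \<omega> - v \<omega>" for \<omega>
    define b where "b \<omega> = F (u \<omega>) - F (v \<omega>)" for \<omega>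
    define g where "g h = (N (\<lambda>\<omega>. a \<omega> + h *\<^sub>R b \<omega>) / N a - 1) / h" for h
    have geq: "(\<lambda>h. (N (\<lambda>\<omega>. fst uv \<omega> - snd uv \<omega> + h *\<^sub>R (F (fst uv \<omega>) - F (snd uv \<omega>)))
           / N (\<lambda>\<omega>. fst uv \<omega> - snd uv \<omega>) - 1) / h) = g"
      by (rule ext) (simp add: uv(1) g_def a_def[abs_def] b_def[abs_def])
    have Dlow: "-1/h \<le> D x y h" if "x \<noteq> y" "0 < h" for x y h
    proof -
      have "0 \<le> nu (x - y + h *\<^sub>R (F x - F y)) / nu (x - y)"
        using nu_nonneg by simp
      then have "(0 - 1) / h \<le> (nu (x - y + h *\<^sub>R (F x - F y)) / nu (x - y) - 1) / h"
        using that by (intro divide_right_mono) auto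
      then show ?thesis by (simp add: D_def)
    qed
    have Sfin: "\<exists>s. S h = ereal s \<and> -1/h \<le> s \<and> (\<forall>x\<in>V. \<forall>y\<in>V. x \<noteq> y \<longrightarrow> D x y h \<le> s)"
      if hS: "0 < h" "S h < \<infinity>" for h
    proof -
      have "ereal (D (u \<omega>0) (v \<omega>0) h) \<le> S h"
        using SUP_upper[of "(u \<omega>0, v \<omega>0)" Pairs "\<lambda>xy. ereal (D (fst xy) (snd xy) h)"] uv uV vV
        unfolding S_def Pairs_def by auto
      moreover have "ereal (-1/h) \<le> ereal (D (u \<omega>0) (v \<omega>0) h)" using Dlow uv that by simp
      ultimately have "ereal (-1/h) \<le> S h" by (rule order_trans[rotated])
      then obtain s where s: "S h = ereal s" using hS by (cases "S h") auto
      have "D x y h \<le> s" if "x \<in> V" "y \<in> V" "x \<noteq> y" for x y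
      proof -
        have "ereal (D x y h) \<le> S h"
          using SUP_upper[of "(x, y)" Pairs "\<lambda>xy. ereal (D (fst xy) (snd xy) h)"] that
          unfolding S_def Pairs_def by auto
        then show ?thesis using s by simp
      qed
      then show ?thesis using s \<open>ereal (-1/h) \<le> S h\<close> by auto
    qed
    have pw: "nu (x - y + h *\<^sub>R (F x - F y)) \<le> (1 + h * s) * nu (x - y)"
      if "0 < h" "x \<noteq> y" "D x y h \<le> s" for x y h s
    proof -
      have p: "0 < nu (x - y)" using nu_pos that by simp
      from that have "(nu (x - y + h *\<^sub>R (F x - F y)) / nu (x - y) - 1) \<le> h * s"
        by (simp add: D_def pos_divide_le_eq mult.commute)
      then have "nu (x - y + h *\<^sub>R (F x - F y)) / nu (x - y) \<le> 1 + h * s" by simp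
      then show ?thesis using p by (simp add: pos_divide_le_eq)
    qed
    have "ereal (Lim (at_right 0) g) \<le> (INF h\<in>{0<..}. S h)"
    proof (cases "(INF h\<in>{0<..}. S h) = \<infinity>")
      case True then show ?thesis by simp
    next
      case False
      then have "(INF h\<in>{0<..}. S h) < \<infinity>" by (simp add: less_top)
      then have "\<exists>h0\<in>{0<..}. S h0 < \<infinity>" by (rule INF_less_iff[THEN iffD1])
      then obtain h0 where h0: "0 < h0" "S h0 < \<infinity>" by auto
      obtain s0 where s0: "-1/h0 \<le> s0" "\<forall>x\<in>V. \<forall>y\<in>V. x \<noteq> y \<longrightarrow> D x y h0 \<le> s0"
        using Sfin[OF h0] by blast
      define L where "L = (2 + h0 * s0) / h0"
      have hs0: "0 \<le> 1 + h0 * s0" using s0(1) h0(1) by (simp add: field_simps)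
      have lipF: "nu (F x - F y) \<le> L * nu (x - y)" if "x \<in> V" "y \<in> V" for x y
      proof (cases "x = y")
        case True then show ?thesis by (simp add: nu0)
      next
        case False
        have A: "nu (x - y + h0 *\<^sub>R (F x - F y)) \<le> (1 + h0 * s0) * nu (x - y)"
          using pw[OF h0(1) False] s0(2) that False by blast
        have "h0 * nu (F x - F y) = nu (h0 *\<^sub>R (F x - F y))" using h0 by (simp add: nu_scale)
        also have "h0 *\<^sub>R (F x - F y) = (x - y + h0 *\<^sub>R (F x - F y)) + - (x - y)" by simp
        also have "nu \<dots> \<le> nu (x - y + h0 *\<^sub>R (F x - F y)) + nu (x - y)"
          using nu_tri nu_neg by metis
        also have "\<dots> \<le> (2 + h0 * s0) * nu (x - y)" using A by (simp add: algebra_simps)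
        finally have "h0 * nu (F x - F y) \<le> (2 + h0 * s0) * nu (x - y)" .
        then show ?thesis using h0(1) by (simp add: L_def field_simps)
      qed
      have L0: "0 \<le> L" using hs0 h0 by (simp add: L_def)
      have Fcont: "continuous_on V F"
      proof (rule lipschitz_on_continuous_on)
        show "(Cl * L * Cu)-lipschitz_on V F"
        proof (rule lipschitz_onI)
          fix x y assume xy: "x \<in> V" "y \<in> V"
          have "dist (F x) (F y) \<le> Cl * nu (F x - F y)" using nu_lower by (simp add: dist_norm)
          also have "\<dots> \<le> Cl * (L * nu (x - y))" using lipF[OF xy] Cl by (rule mult_left_mono)
          also have "\<dots> \<le> Cl * (L * (Cu * norm (x - y)))"
            using nu_upper Cl L0 by (intro mult_left_mono) auto
          finally show "dist (F x) (F y) \<le> Cl * L * Cu * dist x y" by (simp add: dist_norm mult.assoc)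
        next
          show "0 \<le> Cl * L * Cu" using Cl L0 Cu by simp
        qed
      qed
      have ac: "continuous_on K a" unfolding a_def[abs_def] by (intro continuous_intros uc vc)
      have bc: "continuous_on K b" unfolding b_def[abs_def]
        by (intro continuous_on_diff continuous_on_compose2[OF Fcont uc] continuous_on_compose2[OF Fcont vc])
          (use uV vV in auto)
      have abc: "continuous_on K (\<lambda>\<omega>. a \<omega> + h *\<^sub>R b \<omega>)" for h
        by (intro continuous_intros ac bc)
      have Na: "0 < N a" using N_pos[OF ac uv(4)] uv(5) by (simp add: a_def)
      have Nscale: "N (\<lambda>\<omega>. t *\<^sub>R c \<omega>) \<le> t * N c" if "continuous_on K c" "0 \<le> t" for c t
        using that by (intro N_dom) (auto intro: continuous_intros simp: nu_scale)
      have gmono: "g x \<le> g y" if "0 < x" "x \<le> y" for x y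
      proof -
        define phi where "phi h = N (\<lambda>\<omega>. a \<omega> + h *\<^sub>R b \<omega>)" for h
        have phi0: "phi 0 = N a" by (simp add: phi_def)
        have "(phi x / phi 0 - 1) / x \<le> (phi y / phi 0 - 1) / y"
        proof (rule quot_mono)
          show "0 < phi 0" using Na phi0 by simp
          show "0 < x" "x \<le> y" by fact+
          fix t h :: real assume t: "0 \<le> t" "t \<le> 1" and "0 < h"
          have "(\<lambda>\<omega>. a \<omega> + (t*h) *\<^sub>R b \<omega>) = (\<lambda>\<omega>. t *\<^sub>R (a \<omega> + h *\<^sub>R b \<omega>) + (1-t) *\<^sub>R a \<omega>)"
            by (rule ext) (simp add: algebra_simps)
          then have "phi (t*h) = N (\<lambda>\<omega>. t *\<^sub>R (a \<omega> + h *\<^sub>R b \<omega>) + (1-t) *\<^sub>R a \<omega>)"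
            by (simp add: phi_def)
          also have "\<dots> \<le> N (\<lambda>\<omega>. t *\<^sub>R (a \<omega> + h *\<^sub>R b \<omega>)) + N (\<lambda>\<omega>. (1-t) *\<^sub>R a \<omega>)"
            by (intro N_tri continuous_intros ac bc)
          also have "\<dots> \<le> t * phi h + (1-t) * phi 0"
            using add_mono[OF Nscale[OF abc t(1), of h] Nscale[OF ac, of "1-t"]] t phi0 by (simp add: phi_def)
          finally show "phi (t*h) \<le> t * phi h + (1-t) * phi 0" .
        qed
        then show ?thesis by (simp add: g_def phi_def)
      qed
      have glow: "- N b / N a \<le> g h" if "0 < h" for h
      proof -
        have "(\<lambda>\<omega>. a \<omega>) = (\<lambda>\<omega>. (a \<omega> + h *\<^sub>R b \<omega>) + (-h) *\<^sub>R b \<omega>)" by (rule ext) simp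
        then have "N a = N (\<lambda>\<omega>. (a \<omega> + h *\<^sub>R b \<omega>) + (-h) *\<^sub>R b \<omega>)" by simp
        also have "\<dots> \<le> N (\<lambda>\<omega>. a \<omega> + h *\<^sub>R b \<omega>) + N (\<lambda>\<omega>. (-h) *\<^sub>R b \<omega>)"
          by (intro N_tri continuous_intros ac bc)
        also have "N (\<lambda>\<omega>. (-h) *\<^sub>R b \<omega>) \<le> h * N b"
        proof (rule N_dom)
          show "continuous_on K (\<lambda>\<omega>. (-h) *\<^sub>R b \<omega>)"
            by (rule continuous_on_scaleR[OF continuous_on_const bc])
          show "\<forall>\<omega>\<in>K. nu ((-h) *\<^sub>R b \<omega>) \<le> h * nu (b \<omega>)"
            using that by (simp only: nu_scale) simp
        qed (use that bc in auto)
        finally have "N a - h * N b \<le> N (\<lambda>\<omega>. a \<omega> + h *\<^sub>R b \<omega>)" by simp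
        then have "(N a - h * N b) / N a \<le> N (\<lambda>\<omega>. a \<omega> + h *\<^sub>R b \<omega>) / N a"
          using Na by (intro divide_right_mono) auto
        then have "((N a - h * N b) / N a - 1) / h \<le> g h"
          using that unfolding g_def by (intro divide_right_mono) auto
        moreover have "((N a - h * N b) / N a - 1) / h = - N b / N a"
          using that Na by (simp add: field_simps)
        ultimately show ?thesis by simp
      qed
      have gl1: "Lim (at_right 0) g = Inf (g ` {0<..})"
        by (rule mono_Lim_real(1)[of g "- N b / N a"]) (use gmono glow in auto)
      have gl2: "Inf (g ` {0<..}) \<le> g h" if "0 < h" for h
        by (rule mono_Lim_real(2)[of g "- N b / N a"]) (use gmono glow that in auto)
      have "ereal (Inf (g ` {0<..})) \<le> S h" if hpos: "0 < h" for h
      proof (cases "S h < \<infinity>")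
        case False then show ?thesis by (simp add: top.not_eq_extremum)
      next
        case True
        obtain s where s: "S h = ereal s" "-1/h \<le> s" "\<forall>x\<in>V. \<forall>y\<in>V. x \<noteq> y \<longrightarrow> D x y h \<le> s"
          using Sfin[OF hpos True] by blast
        have hs: "0 \<le> 1 + h * s" using s(2) hpos by (simp add: field_simps)
        have "N (\<lambda>\<omega>. a \<omega> + h *\<^sub>R b \<omega>) \<le> (1 + h * s) * N a"
        proof (rule N_dom[OF abc ac hs], intro ballI)
          fix \<omega> assume "\<omega> \<in> K"
          show "nu (a \<omega> + h *\<^sub>R b \<omega>) \<le> (1 + h * s) * nu (a \<omega>)"
          proof (cases "u \<omega> = v \<omega>")
            case True then show ?thesis by (simp add: a_def b_def nu0)
          next
            case False
            then show ?thesis using pw[OF hpos False] s(3) uV vV \<open>\<omega> \<in> K\<close>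
              by (simp add: a_def b_def)
          qed
        qed
        then have "N (\<lambda>\<omega>. a \<omega> + h *\<^sub>R b \<omega>) / N a \<le> 1 + h * s"
          using Na by (simp add: pos_divide_le_eq)
        then have "g h \<le> s" using hpos by (simp add: g_def pos_divide_le_eq mult.commute)
        then show ?thesis using gl2[OF hpos] s(1) by simp
      qed
      then have "ereal (Inf (g ` {0<..})) \<le> (INF h\<in>{0<..}. S h)" by (intro INF_greatest) auto
      then show ?thesis using gl1 by simp
    qed
    then show ?thesis using geq by simp
  qed
  show ?thesis unfolding RHS by (rule SUP_least) (rule H)
qed





lemma Yspace_props:
  assumes "u \<in> Yspace \<Omega> V"
  shows "continuous_on (closure \<Omega>) u" "\<forall>\<omega>\<in>closure \<Omega>. u \<omega> \<in> V"
proof -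
  show "\<forall>\<omega>\<in>closure \<Omega>. u \<omega> \<in> V" using assms by (simp add: Yspace_def)
  have "continuous_on (closure \<Omega>) (\<lambda>x. u x $ i)" for i
  proof -
    obtain U G where UG: "open U" "closure \<Omega> \<subseteq> U" "Ck_on 2 U G" "\<forall>x\<in>closure \<Omega>. G x = u x $ i"
      using assms unfolding Yspace_def by blast
    have "\<forall>x\<in>U. G differentiable (at x)" using UG(3) by (simp add: numeral_2_eq_2)
    then have "continuous_on U G"
      by (intro continuous_at_imp_continuous_on) (auto intro: differentiable_imp_continuous_within)
    then have "continuous_on (closure \<Omega>) G" using UG(2) by (rule continuous_on_subset)
    then show ?thesis using UG(4) by (metis (no_types, lifting) continuous_on_cong)
  qed
  then have "continuous_on (closure \<Omega>) (\<lambda>x. \<chi> i. u x $ i)" by (intro continuous_on_vec_lambda)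
  then show "continuous_on (closure \<Omega>) u" by simp
qed

context
  fixes p :: ereal and Q :: "real^'n^'n"
  assumes p1: "1 \<le> p" and diag: "\<forall>i j. i \<noteq> j \<longrightarrow> Q $ i $ j = 0" and qpos: "\<forall>i. Q $ i $ i > 0"
begin

definition "nuQ z = pnorm p (Q *v z)"

lemma nuQ_tri: "nuQ (x + y) \<le> nuQ x + nuQ y"
  unfolding nuQ_def matrix_vector_right_distrib by (rule pnorm_triangle[OF p1])

lemma nuQ_scale: "nuQ (c *\<^sub>R x) = \<bar>c\<bar> * nuQ x"
  unfolding nuQ_def matrix_vector_mult_scaleR by (rule pnorm_scale[OF p1])

lemma nuQ_nonneg: "0 \<le> nuQ x"
  unfolding nuQ_def by (rule pnorm_nonneg)

lemma nuQ_comp: "Q $ i $ i * \<bar>x $ i\<bar> \<le> nuQ x"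
proof -
  have "\<bar>(Q *v x) $ i\<bar> \<le> nuQ x" unfolding nuQ_def by (rule pnorm_comp[OF p1])
  moreover have "\<bar>Q $ i $ i\<bar> = Q $ i $ i" using qpos by (simp add: less_imp_le)
  ultimately show ?thesis by (simp add: diag_mult[OF diag] abs_mult)
qed

lemma nuQ_pos: "x \<noteq> 0 \<Longrightarrow> 0 < nuQ x"
proof -
  assume "x \<noteq> 0"
  then obtain i where "x $ i \<noteq> 0" by (auto simp: vec_eq_iff)
  then have "0 < Q $ i $ i * \<bar>x $ i\<bar>" using qpos by simp
  then show ?thesis using nuQ_comp[of i x] by linarith
qed

lemma nuQ_lower: "norm x \<le> (\<Sum>i\<in>UNIV. 1 / Q $ i $ i) * nuQ x"
proof -
  have "norm x \<le> (\<Sum>i\<in>UNIV. \<bar>x $ i\<bar>)" by (rule norm_le_l1_cart)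
  also have "\<dots> \<le> (\<Sum>i\<in>UNIV. 1 / Q $ i $ i * nuQ x)"
  proof (rule sum_mono)
    fix i
    have "Q $ i $ i * \<bar>x $ i\<bar> \<le> nuQ x" by (rule nuQ_comp)
    then show "\<bar>x $ i\<bar> \<le> 1 / Q $ i $ i * nuQ x" using qpos
      by (simp add: field_simps mult.commute)
  qed
  also have "\<dots> = (\<Sum>i\<in>UNIV. 1 / Q $ i $ i) * nuQ x" by (simp add: sum_distrib_right)
  finally show ?thesis .
qed

lemma nuQ_upper: "\<exists>C\<ge>0. \<forall>x. nuQ x \<le> C * norm x"
proof -
  obtain B where B: "B > 0" "\<forall>x. norm (Q *v x) \<le> norm x * B"
    using bounded_linear.pos_bounded[OF matrix_vector_mul_bounded_linear[of Q]] by blast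
  have "nuQ x \<le> (real CARD('n) * B) * norm x" for x
  proof -
    have "nuQ x \<le> real CARD('n) * norm (Q *v x)" unfolding nuQ_def by (rule pnorm_upper[OF p1])
    also have "\<dots> \<le> real CARD('n) * (norm x * B)" using B by (intro mult_left_mono) auto
    finally show ?thesis by (simp add: algebra_simps)
  qed
  then show ?thesis using B by (intro exI[of _ "real CARD('n) * B"]) auto
qed

lemma nuQ_cont: "continuous_on S nuQ"
proof -
  have "continuous_on S (\<lambda>z. pnorm p (Q *v z))"
    by (rule continuous_on_compose2[OF pnorm_continuous[OF p1, of UNIV]])
      (auto intro: linear_continuous_on matrix_vector_mul_bounded_linear)
  then show ?thesis by (simp add: nuQ_def[abs_def])
qed

end




context
  fixes \<Omega> :: "'m::euclidean_space set" and P :: real and Q :: "real^'n^'n"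
  assumes oO: "open \<Omega>" and bO: "bounded \<Omega>" and P1: "1 \<le> P"
    and diag: "\<forall>i j. i \<noteq> j \<longrightarrow> Q $ i $ j = 0"
    and qpos: "\<forall>i. Q $ i $ i > 0"
begin

lemma diag': "\<forall>i j. i \<noteq> j \<longrightarrow> Q $ i $ j = 0" using diag by auto
lemma p1': "1 \<le> ereal P" using P1 by simp
lemmas nuQd = nuQ_def[OF p1' diag' qpos]

lemma cont_powr:
  fixes f :: "'m \<Rightarrow> real"
  assumes "continuous_on (closure \<Omega>) f"
  shows "continuous_on (closure \<Omega>) (\<lambda>x. \<bar>f x\<bar> powr P)"
  using P1 by (intro continuous_on_powr' continuous_intros assms) auto

lemma Lp_fin:
  fixes f :: "'m \<Rightarrow> real"
  assumes "continuous_on (closure \<Omega>) f"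
  shows "Lp_norm (ereal P) \<Omega> f = (LINT x|lebesgue_on \<Omega>. \<bar>f x\<bar> powr P) powr (1/P)"
proof -
  have sO: "\<Omega> \<inter> space lebesgue \<in> sets lebesgue" using oO by (simp add: open_sets_lebesgue)
  have "(\<integral>\<^sup>+ x\<in>\<Omega>. ennreal (\<bar>f x\<bar> powr P) \<partial>lebesgue) = (\<integral>\<^sup>+ x. ennreal (\<bar>f x\<bar> powr P) \<partial>lebesgue_on \<Omega>)"
    by (rule nn_integral_restrict_space[OF sO, symmetric])
  moreover have "enn2real (\<integral>\<^sup>+ x. ennreal (\<bar>f x\<bar> powr P) \<partial>lebesgue_on \<Omega>) = (LINT x|lebesgue_on \<Omega>. \<bar>f x\<bar> powr P)"
    by (rule enn2real_nn_integral_eq_integral) (auto intro: cont_meas[OF oO cont_powr[OF assms]])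
  ultimately show ?thesis by (simp add: Lp_norm_def)
qed

lemma nu_powr: "nuQ (ereal P) Q z powr P = (\<Sum>i\<in>UNIV. Q $ i $ i powr P * \<bar>z $ i\<bar> powr P)"
proof -
  have "nuQ (ereal P) Q z powr P = (\<Sum>i\<in>UNIV. \<bar>(Q *v z) $ i\<bar> powr P)"
    using P1 by (simp add: nuQd pnorm_fin powr_powr sum_nonneg)
  also have "\<dots> = (\<Sum>i\<in>UNIV. Q $ i $ i powr P * \<bar>z $ i\<bar> powr P)"
    using qpos by (intro sum.cong refl) (simp add: diag_mult[OF diag'] abs_mult powr_mult less_imp_le)
  finally show ?thesis .
qed

lemma cont_nu:
  assumes "continuous_on (closure \<Omega>) c"
  shows "continuous_on (closure \<Omega>) (\<lambda>\<omega>. nuQ (ereal P) Q (c \<omega>) powr P)"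
proof -
  have "continuous_on (closure \<Omega>) (\<lambda>\<omega>. nuQ (ereal P) Q (c \<omega>))"
    by (rule continuous_on_compose2[OF nuQ_cont[OF p1' diag' qpos, of UNIV] assms]) auto
  then show ?thesis using P1 nuQ_nonneg[OF p1' diag' qpos]
    by (intro continuous_on_powr' continuous_intros) auto
qed

lemma Xnorm_fin:
  assumes c: "continuous_on (closure \<Omega>) c"
  shows "Xnorm (ereal P) Q \<Omega> c = (LINT \<omega>|lebesgue_on \<Omega>. nuQ (ereal P) Q (c \<omega>) powr P) powr (1/P)"
proof -
  have ci: "continuous_on (closure \<Omega>) (\<lambda>\<omega>. c \<omega> $ i)" for i
    by (intro continuous_intros c)
  define I where "I i = (LINT x|lebesgue_on \<Omega>. \<bar>c x $ i\<bar> powr P)" for i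
  have I0: "0 \<le> I i" for i unfolding I_def by (rule integral_nonneg_AE) auto
  have intg: "integrable (lebesgue_on \<Omega>) (\<lambda>x. \<bar>c x $ i\<bar> powr P)" for i
    by (rule cont_integrable[OF oO bO cont_powr[OF ci]])
  have "Xnorm (ereal P) Q \<Omega> c = (\<Sum>i\<in>UNIV. \<bar>Q $ i $ i * I i powr (1/P)\<bar> powr P) powr (1/P)"
    unfolding Xnorm_def pnorm_fin using Lp_fin[OF ci] by (simp add: I_def)
  also have "(\<Sum>i\<in>UNIV. \<bar>Q $ i $ i * I i powr (1/P)\<bar> powr P) = (\<Sum>i\<in>UNIV. Q $ i $ i powr P * I i)"
  proof (intro sum.cong refl)
    fix i
    have "\<bar>Q $ i $ i * I i powr (1/P)\<bar> powr P = Q $ i $ i powr P * (I i powr (1/P)) powr P"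
      using qpos I0 by (simp add: abs_mult powr_mult less_imp_le)
    also have "(I i powr (1/P)) powr P = I i" using I0 P1 by (simp add: powr_powr)
    finally show "\<bar>Q $ i $ i * I i powr (1/P)\<bar> powr P = Q $ i $ i powr P * I i" .
  qed
  also have "\<dots> = (LINT \<omega>|lebesgue_on \<Omega>. (\<Sum>i\<in>UNIV. Q $ i $ i powr P * \<bar>c \<omega> $ i\<bar> powr P))"
    using intg by (simp add: I_def integral_sum)
  also have "\<dots> = (LINT \<omega>|lebesgue_on \<Omega>. nuQ (ereal P) Q (c \<omega>) powr P)"
    by (simp add: nu_powr)
  finally show ?thesis .
qed


lemma nu_powr': "nuQ (ereal P) Q z powr P = (\<Sum>i\<in>UNIV. \<bar>Q $ i $ i * z $ i\<bar> powr P)"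
  unfolding nu_powr using qpos by (intro sum.cong refl) (simp add: abs_mult powr_mult less_imp_le)

lemma nu_pow_mink:
  assumes A: "0 < A" and B: "0 < B"
  shows "nuQ (ereal P) Q (x + y) powr P \<le> (A+B) powr P * (A/(A+B) * (nuQ (ereal P) Q x powr P / A powr P) + B/(A+B) * (nuQ (ereal P) Q y powr P / B powr P))"
proof -
  have "nuQ (ereal P) Q (x + y) powr P = (\<Sum>i\<in>UNIV. \<bar>Q $ i $ i * x $ i + Q $ i $ i * y $ i\<bar> powr P)"
    unfolding nu_powr' by (simp add: algebra_simps)
  also have "\<dots> \<le> (\<Sum>i\<in>UNIV. (A+B) powr P * (A/(A+B) * (\<bar>Q $ i $ i * x $ i\<bar> powr P / A powr P) + B/(A+B) * (\<bar>Q $ i $ i * y $ i\<bar> powr P / B powr P)))"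
    by (intro sum_mono scal_mink[OF P1 A B])
  also have "\<dots> = (A+B) powr P * (A/(A+B) * ((\<Sum>i\<in>UNIV. \<bar>Q $ i $ i * x $ i\<bar> powr P) / A powr P) + B/(A+B) * ((\<Sum>i\<in>UNIV. \<bar>Q $ i $ i * y $ i\<bar> powr P) / B powr P))"
    by (rule sum_lin_aux)
  finally show ?thesis unfolding nu_powr' .
qed

definition "JJ c = (LINT \<omega>|lebesgue_on \<Omega>. nuQ (ereal P) Q (c \<omega>) powr P)"

lemma JJ_nonneg: "0 \<le> JJ c"
  unfolding JJ_def by (rule integral_nonneg_AE) auto

lemma JJ_int: "continuous_on (closure \<Omega>) c \<Longrightarrow> integrable (lebesgue_on \<Omega>) (\<lambda>\<omega>. nuQ (ereal P) Q (c \<omega>) powr P)"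
  by (rule cont_integrable[OF oO bO cont_nu])

lemma N_tri_fin:
  assumes c: "continuous_on (closure \<Omega>) c" and d: "continuous_on (closure \<Omega>) d"
  shows "Xnorm (ereal P) Q \<Omega> (\<lambda>\<omega>. c \<omega> + d \<omega>) \<le> Xnorm (ereal P) Q \<Omega> c + Xnorm (ereal P) Q \<Omega> d"
proof -
  have cd: "continuous_on (closure \<Omega>) (\<lambda>\<omega>. c \<omega> + d \<omega>)" by (intro continuous_intros c d)
  have "JJ (\<lambda>\<omega>. c \<omega> + d \<omega>) powr (1/P) \<le> JJ c powr (1/P) + JJ d powr (1/P)"
  proof (rule mink_real[OF P1 JJ_nonneg JJ_nonneg JJ_nonneg])
    fix A B :: real assume A: "0 < A" and B: "0 < B"
    define k1 where "k1 = (A+B) powr P * (A/(A+B)) / A powr P"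
    define k2 where "k2 = (A+B) powr P * (B/(A+B)) / B powr P"
    have "JJ (\<lambda>\<omega>. c \<omega> + d \<omega>) \<le> (LINT \<omega>|lebesgue_on \<Omega>. k1 * nuQ (ereal P) Q (c \<omega>) powr P + k2 * nuQ (ereal P) Q (d \<omega>) powr P)"
      unfolding JJ_def
    proof (rule integral_mono)
      show "integrable (lebesgue_on \<Omega>) (\<lambda>\<omega>. nuQ (ereal P) Q (c \<omega> + d \<omega>) powr P)"
        by (rule JJ_int[OF cd])
      show "integrable (lebesgue_on \<Omega>) (\<lambda>\<omega>. k1 * nuQ (ereal P) Q (c \<omega>) powr P + k2 * nuQ (ereal P) Q (d \<omega>) powr P)"
        using JJ_int[OF c] JJ_int[OF d] by auto
      fix \<omega>
      show "nuQ (ereal P) Q (c \<omega> + d \<omega>) powr P \<le> k1 * nuQ (ereal P) Q (c \<omega>) powr P + k2 * nuQ (ereal P) Q (d \<omega>) powr P"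
        using nu_pow_mink[OF A B, of "c \<omega>" "d \<omega>"] by (simp add: k1_def k2_def algebra_simps)
    qed
    also have "\<dots> = k1 * JJ c + k2 * JJ d"
      using JJ_int[OF c] JJ_int[OF d] by (simp add: JJ_def)
    also have "\<dots> = (A+B) powr P * (A/(A+B) * (JJ c / A powr P) + B/(A+B) * (JJ d / B powr P))"
      by (simp add: k1_def k2_def algebra_simps)
    finally show "JJ (\<lambda>\<omega>. c \<omega> + d \<omega>) \<le> (A+B) powr P * (A/(A+B) * (JJ c / A powr P) + B/(A+B) * (JJ d / B powr P))" .
  qed
  then show ?thesis using Xnorm_fin[OF c] Xnorm_fin[OF d] Xnorm_fin[OF cd] by (simp add: JJ_def)
qed

lemma N_dom_fin:
  assumes c: "continuous_on (closure \<Omega>) c" and a: "continuous_on (closure \<Omega>) a" and k: "0 \<le> k"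
    and dom: "\<forall>\<omega>\<in>closure \<Omega>. nuQ (ereal P) Q (c \<omega>) \<le> k * nuQ (ereal P) Q (a \<omega>)"
  shows "Xnorm (ereal P) Q \<Omega> c \<le> k * Xnorm (ereal P) Q \<Omega> a"
proof -
  have "JJ c \<le> (LINT \<omega>|lebesgue_on \<Omega>. k powr P * nuQ (ereal P) Q (a \<omega>) powr P)"
    unfolding JJ_def
  proof (rule integral_mono)
    show "integrable (lebesgue_on \<Omega>) (\<lambda>\<omega>. nuQ (ereal P) Q (c \<omega>) powr P)" by (rule JJ_int[OF c])
    show "integrable (lebesgue_on \<Omega>) (\<lambda>\<omega>. k powr P * nuQ (ereal P) Q (a \<omega>) powr P)"
      using JJ_int[OF a] by auto
    fix \<omega> assume "\<omega> \<in> space (lebesgue_on \<Omega>)"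
    then have "\<omega> \<in> closure \<Omega>" using closure_subset by (auto simp: space_lebesgue_on)
    then have "nuQ (ereal P) Q (c \<omega>) powr P \<le> (k * nuQ (ereal P) Q (a \<omega>)) powr P"
      using dom P1 nuQ_nonneg[OF p1' diag' qpos] by (intro powr_mono2) auto
    also have "\<dots> = k powr P * nuQ (ereal P) Q (a \<omega>) powr P"
      using k nuQ_nonneg[OF p1' diag' qpos] by (simp add: powr_mult)
    finally show "nuQ (ereal P) Q (c \<omega>) powr P \<le> k powr P * nuQ (ereal P) Q (a \<omega>) powr P" .
  qed
  also have "\<dots> = k powr P * JJ a" by (simp add: JJ_def)
  finally have "JJ c powr (1/P) \<le> (k powr P * JJ a) powr (1/P)"
    using P1 JJ_nonneg by (intro powr_mono2) auto
  also have "\<dots> = k * JJ a powr (1/P)"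
    using k P1 JJ_nonneg by (simp add: powr_mult powr_powr)
  finally show ?thesis using Xnorm_fin[OF c] Xnorm_fin[OF a] by (simp add: JJ_def)
qed

lemma N_pos_fin:
  assumes a: "continuous_on (closure \<Omega>) a" and w0: "\<omega>0 \<in> closure \<Omega>" "a \<omega>0 \<noteq> 0"
  shows "0 < Xnorm (ereal P) Q \<Omega> a"
proof -
  have "JJ a \<noteq> 0"
  proof
    assume "JJ a = 0"
    then have "AE \<omega> in lebesgue_on \<Omega>. nuQ (ereal P) Q (a \<omega>) powr P = 0"
      using integral_nonneg_eq_0_iff_AE[OF JJ_int[OF a]] by (simp add: JJ_def)
    then have "AE \<omega> in lebesgue_on \<Omega>. nuQ (ereal P) Q (a \<omega>) powr P \<le> 0" by (auto elim: AE_mp)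
    moreover have "0 < nuQ (ereal P) Q (a \<omega>0) powr P"
      using nuQ_pos[OF p1' diag' qpos w0(2)] by simp
    ultimately show False using pos_contra[OF oO cont_nu[OF a] w0(1)] by blast
  qed
  then have "0 < JJ a" using JJ_nonneg[of a] by simp
  then show ?thesis using Xnorm_fin[OF a] by (simp add: JJ_def)
qed

end



context
  fixes \<Omega> :: "'m::euclidean_space set" and Q :: "real^'n^'n"
  assumes oO: "open \<Omega>" and bO: "bounded \<Omega>" and neO: "\<Omega> \<noteq> {}"
    and diag: "\<forall>i j. i \<noteq> j \<longrightarrow> Q $ i $ j = 0"
    and qpos: "\<forall>i. Q $ i $ i > 0"
begin

definition "EE f = real_of_ereal (esssup (lebesgue_on \<Omega>) (\<lambda>x. ereal \<bar>f x\<bar>))"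

lemma pinf: "1 \<le> (\<infinity>::ereal)" by simp
lemmas nuQi = nuQ_def[OF pinf diag qpos]

lemma EE_props:
  fixes f :: "'m \<Rightarrow> real"
  assumes f: "continuous_on (closure \<Omega>) f"
  shows "0 \<le> EE f" "AE x in lebesgue_on \<Omega>. \<bar>f x\<bar> \<le> EE f"
    "\<And>r. AE x in lebesgue_on \<Omega>. \<bar>f x\<bar> \<le> r \<Longrightarrow> EE f \<le> r"
proof -
  define e where "e = esssup (lebesgue_on \<Omega>) (\<lambda>x. ereal \<bar>f x\<bar>)"
  have meas: "(\<lambda>x. ereal \<bar>f x\<bar>) \<in> borel_measurable (lebesgue_on \<Omega>)"
    using cont_meas[OF oO f] by (simp add: borel_measurable_ereal_iff)
  obtain w where w: "w \<in> \<Omega>" using neO by blast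
  have "emeasure (lebesgue_on \<Omega>) (space (lebesgue_on \<Omega>)) = emeasure lebesgue \<Omega>"
    using oO by (simp add: space_lebesgue_on emeasure_restrict_space open_sets_lebesgue)
  also have "\<dots> > 0" using open_pos_measure[OF oO w] .
  finally have sp: "emeasure (lebesgue_on \<Omega>) (space (lebesgue_on \<Omega>)) \<noteq> 0" by simp
  have "esssup (lebesgue_on \<Omega>) (\<lambda>x. 0::ereal) \<le> e"
    unfolding e_def by (rule esssup_mono) auto
  then have e0: "0 \<le> e" using esssup_const[OF sp, of "0::ereal"] by simp
  have "compact (f ` closure \<Omega>)" using bO f
    by (intro compact_continuous_image) (auto simp: compact_closure)
  then obtain B where B: "\<forall>y\<in>f ` closure \<Omega>. norm y \<le> B"
    using compact_imp_bounded bounded_iff by metis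
  have "AE x in lebesgue_on \<Omega>. ereal \<bar>f x\<bar> \<le> ereal B"
    using B closure_subset by (intro AE_I2) (auto simp: space_lebesgue_on)
  then have eB: "e \<le> ereal B" unfolding e_def using meas by (intro esssup_I)
  have eeq: "e = ereal (EE f)" using e0 eB by (cases e) (auto simp: EE_def e_def)
  show "0 \<le> EE f" using e0 eeq by simp
  show "AE x in lebesgue_on \<Omega>. \<bar>f x\<bar> \<le> EE f"
    using esssup_AE[of "\<lambda>x. ereal \<bar>f x\<bar>" "lebesgue_on \<Omega>"] eeq by (simp add: e_def)
  fix r assume "AE x in lebesgue_on \<Omega>. \<bar>f x\<bar> \<le> r"
  then have "AE x in lebesgue_on \<Omega>. ereal \<bar>f x\<bar> \<le> ereal r" by simp
  then have "e \<le> ereal r" unfolding e_def using meas by (intro esssup_I)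
  then show "EE f \<le> r" using eeq by simp
qed

lemma Xnorm_inf: "Xnorm \<infinity> Q \<Omega> c = Max (range (\<lambda>i. \<bar>Q $ i $ i * EE (\<lambda>x. c x $ i)\<bar>))"
  by (simp add: Xnorm_def pnorm_def Lp_norm_def EE_def)

lemma nuQ_inf: "nuQ \<infinity> Q z = Max (range (\<lambda>i. \<bar>Q $ i $ i * z $ i\<bar>))"
  by (simp add: nuQi pnorm_def diag_mult[OF diag])

lemma Xnorm_ge: "continuous_on (closure \<Omega>) c \<Longrightarrow> Q $ i $ i * EE (\<lambda>x. c x $ i) \<le> Xnorm \<infinity> Q \<Omega> c"
proof -
  assume c: "continuous_on (closure \<Omega>) c"
  have "Q $ i $ i * EE (\<lambda>x. c x $ i) \<le> \<bar>Q $ i $ i * EE (\<lambda>x. c x $ i)\<bar>" by simp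
  also have "\<dots> \<le> Max (range (\<lambda>i. \<bar>Q $ i $ i * EE (\<lambda>x. c x $ i)\<bar>))" by (rule Max_ge) auto
  finally show ?thesis by (simp add: Xnorm_inf)
qed

lemma N_tri_inf:
  assumes c: "continuous_on (closure \<Omega>) c" and d: "continuous_on (closure \<Omega>) d"
  shows "Xnorm \<infinity> Q \<Omega> (\<lambda>\<omega>. c \<omega> + d \<omega>) \<le> Xnorm \<infinity> Q \<Omega> c + Xnorm \<infinity> Q \<Omega> d"
proof -
  have bound: "\<bar>Q $ i $ i * EE (\<lambda>x. (c x + d x) $ i)\<bar> \<le> Xnorm \<infinity> Q \<Omega> c + Xnorm \<infinity> Q \<Omega> d" for i
  proof -
    have ci: "continuous_on (closure \<Omega>) (\<lambda>x. c x $ i)" by (intro continuous_intros c)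
    have di: "continuous_on (closure \<Omega>) (\<lambda>x. d x $ i)" by (intro continuous_intros d)
    have cdi: "continuous_on (closure \<Omega>) (\<lambda>x. (c x + d x) $ i)" by (intro continuous_intros c d)
    have "AE x in lebesgue_on \<Omega>. \<bar>(c x + d x) $ i\<bar> \<le> EE (\<lambda>x. c x $ i) + EE (\<lambda>x. d x $ i)"
      using EE_props(2)[OF ci] EE_props(2)[OF di] by eventually_elim (simp add: abs_triangle_ineq order_trans)
    then have "EE (\<lambda>x. (c x + d x) $ i) \<le> EE (\<lambda>x. c x $ i) + EE (\<lambda>x. d x $ i)"
      by (rule EE_props(3)[OF cdi])
    then have "Q $ i $ i * EE (\<lambda>x. (c x + d x) $ i) \<le> Q $ i $ i * EE (\<lambda>x. c x $ i) + Q $ i $ i * EE (\<lambda>x. d x $ i)"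
      using qpos by (simp add: distrib_left[symmetric] mult_left_mono less_imp_le)
    also have "\<dots> \<le> Xnorm \<infinity> Q \<Omega> c + Xnorm \<infinity> Q \<Omega> d"
      by (intro add_mono Xnorm_ge c d)
    finally show ?thesis using qpos EE_props(1)[OF cdi] by (simp add: abs_mult less_imp_le)
  qed
  show ?thesis unfolding Xnorm_inf[of "\<lambda>\<omega>. c \<omega> + d \<omega>"] using bound by (simp add: Max_le_iff)
qed

lemma N_dom_inf:
  assumes c: "continuous_on (closure \<Omega>) c" and a: "continuous_on (closure \<Omega>) a" and k: "0 \<le> k"
    and dom: "\<forall>\<omega>\<in>closure \<Omega>. nuQ \<infinity> Q (c \<omega>) \<le> k * nuQ \<infinity> Q (a \<omega>)"
  shows "Xnorm \<infinity> Q \<Omega> c \<le> k * Xnorm \<infinity> Q \<Omega> a"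
proof -
  have ai: "continuous_on (closure \<Omega>) (\<lambda>x. a x $ j)" for j by (intro continuous_intros a)
  have ci: "continuous_on (closure \<Omega>) (\<lambda>x. c x $ j)" for j by (intro continuous_intros c)
  have AEa: "AE x in lebesgue_on \<Omega>. \<forall>j. \<bar>a x $ j\<bar> \<le> EE (\<lambda>x. a x $ j)"
    by (rule eventually_all_finite) (rule EE_props(2)[OF ai])
  have bound: "\<bar>Q $ i $ i * EE (\<lambda>x. c x $ i)\<bar> \<le> k * Xnorm \<infinity> Q \<Omega> a" for i
  proof -
    have qi: "0 < Q $ i $ i" using qpos by simp
    have "AE x in lebesgue_on \<Omega>. \<bar>c x $ i\<bar> \<le> k * Xnorm \<infinity> Q \<Omega> a / Q $ i $ i"
      using AEa AE_space
    proof eventually_elim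
      case (elim x)
      then have xc: "x \<in> closure \<Omega>" using closure_subset by (auto simp: space_lebesgue_on)
      have "nuQ \<infinity> Q (a x) \<le> Xnorm \<infinity> Q \<Omega> a"
        unfolding nuQ_inf
      proof (subst Max_le_iff, simp, simp, intro ballI)
        fix t assume "t \<in> range (\<lambda>j. \<bar>Q $ j $ j * a x $ j\<bar>)"
        then obtain j where t: "t = \<bar>Q $ j $ j * a x $ j\<bar>" by auto
        have "t = Q $ j $ j * \<bar>a x $ j\<bar>" using qpos t by (simp add: abs_mult less_imp_le)
        also have "\<dots> \<le> Q $ j $ j * EE (\<lambda>x. a x $ j)"
          using elim qpos by (intro mult_left_mono) (auto simp: less_imp_le)
        also have "\<dots> \<le> Xnorm \<infinity> Q \<Omega> a" by (rule Xnorm_ge[OF a])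
        finally show "t \<le> Xnorm \<infinity> Q \<Omega> a" .
      qed
      have "Q $ i $ i * \<bar>c x $ i\<bar> \<le> nuQ \<infinity> Q (c x)" by (rule nuQ_comp[OF pinf diag qpos])
      also have "\<dots> \<le> k * nuQ \<infinity> Q (a x)" using dom xc by blast
      also have "\<dots> \<le> k * Xnorm \<infinity> Q \<Omega> a" using k \<open>nuQ \<infinity> Q (a x) \<le> Xnorm \<infinity> Q \<Omega> a\<close>
        by (rule mult_left_mono[rotated])
      finally show ?case using qi by (simp add: field_simps mult.commute)
    qed
    then have "EE (\<lambda>x. c x $ i) \<le> k * Xnorm \<infinity> Q \<Omega> a / Q $ i $ i" by (rule EE_props(3)[OF ci])
    then have "Q $ i $ i * EE (\<lambda>x. c x $ i) \<le> k * Xnorm \<infinity> Q \<Omega> a" using qi by (simp add: field_simps mult.commute)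
    then show ?thesis using qi EE_props(1)[OF ci] by (simp add: abs_mult)
  qed
  show ?thesis unfolding Xnorm_inf[of c] using bound by (simp add: Max_le_iff)
qed

lemma N_pos_inf:
  assumes a: "continuous_on (closure \<Omega>) a" and w0: "\<omega>0 \<in> closure \<Omega>" "a \<omega>0 \<noteq> 0"
  shows "0 < Xnorm \<infinity> Q \<Omega> a"
proof (rule ccontr)
  assume "\<not> 0 < Xnorm \<infinity> Q \<Omega> a"
  then have X0: "Xnorm \<infinity> Q \<Omega> a \<le> 0" by simp
  obtain i where i: "a \<omega>0 $ i \<noteq> 0" using w0(2) by (auto simp: vec_eq_iff)
  have ai: "continuous_on (closure \<Omega>) (\<lambda>x. a x $ i)" by (intro continuous_intros a)
  have "Q $ i $ i * EE (\<lambda>x. a x $ i) \<le> 0" using Xnorm_ge[OF a, of i] X0 by simp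
  then have E0: "EE (\<lambda>x. a x $ i) \<le> 0" using qpos by (simp add: mult_le_0_iff less_le_not_le)
  have "AE x in lebesgue_on \<Omega>. \<bar>a x $ i\<bar> \<le> 0"
    using EE_props(2)[OF ai] by eventually_elim (use E0 in linarith)
  moreover have "continuous_on (closure \<Omega>) (\<lambda>x. \<bar>a x $ i\<bar>)" by (intro continuous_intros ai)
  ultimately show False using pos_contra[OF oO _ w0(1)] i by fastforce
qed

end



theorem lemma7:
  fixes \<Omega> :: "'m::euclidean_space set"
    and V :: "(real^'n) set"
    and F :: "real^'n \<Rightarrow> real^'n"
    and p :: ereal
    and Q :: "real^'n^'n"
  assumes "bounded_smooth_domain \<Omega>"
    and "1 \<le> p"
    and "\<forall>i j. i \<noteq> j \<longrightarrow> Q $ i $ j = 0"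
    and "\<forall>i. Q $ i $ i > 0"
  shows "M_plus_YX p Q \<Omega> V (\<lambda>w \<omega>. F (w \<omega>)) \<le> M_pQ p Q V F"
proof -
  have oO: "open \<Omega>" and bO: "bounded \<Omega>" and neO: "\<Omega> \<noteq> {}"
    using assms(1) by (auto simp: bounded_smooth_domain_def)
  note p1 = assms(2) and diag = assms(3) and qpos = assms(4)
  obtain Cu where Cu: "0 \<le> Cu" "\<And>x. nuQ p Q x \<le> Cu * norm x"
    using nuQ_upper[OF p1 diag qpos] by blast
  have Cl: "0 \<le> (\<Sum>i\<in>UNIV. 1 / Q $ i $ i)" using qpos by (intro sum_nonneg) (simp add: less_imp_le)
  have N_tri: "\<And>c d. continuous_on (closure \<Omega>) c \<Longrightarrow> continuous_on (closure \<Omega>) d \<Longrightarrow>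
      Xnorm p Q \<Omega> (\<lambda>\<omega>. c \<omega> + d \<omega>) \<le> Xnorm p Q \<Omega> c + Xnorm p Q \<Omega> d"
    using p1
  proof (cases rule: ereal_cases_p)
    case 1 then show "\<And>c d. continuous_on (closure \<Omega>) c \<Longrightarrow> continuous_on (closure \<Omega>) d \<Longrightarrow>
      Xnorm p Q \<Omega> (\<lambda>\<omega>. c \<omega> + d \<omega>) \<le> Xnorm p Q \<Omega> c + Xnorm p Q \<Omega> d"
      using N_tri_inf[OF oO bO neO diag qpos] by simp
  next
    case (2 P) then show "\<And>c d. continuous_on (closure \<Omega>) c \<Longrightarrow> continuous_on (closure \<Omega>) d \<Longrightarrow>
      Xnorm p Q \<Omega> (\<lambda>\<omega>. c \<omega> + d \<omega>) \<le> Xnorm p Q \<Omega> c + Xnorm p Q \<Omega> d"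
      using N_tri_fin[OF oO bO 2(2) diag qpos] by simp
  qed
  have N_dom: "\<And>c a k. continuous_on (closure \<Omega>) c \<Longrightarrow> continuous_on (closure \<Omega>) a \<Longrightarrow> 0 \<le> k \<Longrightarrow>
        (\<forall>\<omega>\<in>closure \<Omega>. nuQ p Q (c \<omega>) \<le> k * nuQ p Q (a \<omega>)) \<Longrightarrow> Xnorm p Q \<Omega> c \<le> k * Xnorm p Q \<Omega> a"
    using p1
  proof (cases rule: ereal_cases_p)
    case 1 then show "\<And>c a k. continuous_on (closure \<Omega>) c \<Longrightarrow> continuous_on (closure \<Omega>) a \<Longrightarrow> 0 \<le> k \<Longrightarrow>
        (\<forall>\<omega>\<in>closure \<Omega>. nuQ p Q (c \<omega>) \<le> k * nuQ p Q (a \<omega>)) \<Longrightarrow> Xnorm p Q \<Omega> c \<le> k * Xnorm p Q \<Omega> a"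
      using N_dom_inf[OF oO bO neO diag qpos] by simp
  next
    case (2 P) then show "\<And>c a k. continuous_on (closure \<Omega>) c \<Longrightarrow> continuous_on (closure \<Omega>) a \<Longrightarrow> 0 \<le> k \<Longrightarrow>
        (\<forall>\<omega>\<in>closure \<Omega>. nuQ p Q (c \<omega>) \<le> k * nuQ p Q (a \<omega>)) \<Longrightarrow> Xnorm p Q \<Omega> c \<le> k * Xnorm p Q \<Omega> a"
      using N_dom_fin[OF oO bO 2(2) diag qpos] by simp
  qed
  have N_pos: "\<And>a \<omega>0. continuous_on (closure \<Omega>) a \<Longrightarrow> \<omega>0 \<in> closure \<Omega> \<Longrightarrow> a \<omega>0 \<noteq> 0 \<Longrightarrow> 0 < Xnorm p Q \<Omega> a"
    using p1
  proof (cases rule: ereal_cases_p)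
    case 1 then show "\<And>a \<omega>0. continuous_on (closure \<Omega>) a \<Longrightarrow> \<omega>0 \<in> closure \<Omega> \<Longrightarrow> a \<omega>0 \<noteq> 0 \<Longrightarrow> 0 < Xnorm p Q \<Omega> a"
      using N_pos_inf[OF oO bO neO diag qpos] by simp
  next
    case (2 P) then show "\<And>a \<omega>0. continuous_on (closure \<Omega>) a \<Longrightarrow> \<omega>0 \<in> closure \<Omega> \<Longrightarrow> a \<omega>0 \<noteq> 0 \<Longrightarrow> 0 < Xnorm p Q \<Omega> a"
      using N_pos_fin[OF oO bO 2(2) diag qpos] by simp
  qed
  have K: "(SUP uv \<in> {(u, v). u \<in> Yspace \<Omega> V \<and> v \<in> Yspace \<Omega> V \<and> (\<exists>\<omega>\<in>closure \<Omega>. u \<omega> \<noteq> v \<omega>)}.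
       ereal (Lim (at_right (0::real)) (\<lambda>h.
         (Xnorm p Q \<Omega> (\<lambda>\<omega>. fst uv \<omega> - snd uv \<omega> + h *\<^sub>R (F (fst uv \<omega>) - F (snd uv \<omega>)))
           / Xnorm p Q \<Omega> (\<lambda>\<omega>. fst uv \<omega> - snd uv \<omega>) - 1) / h)))
   \<le> Lim (at_right (0::real)) (\<lambda>h.
     SUP xy \<in> {(x, y). x \<in> V \<and> y \<in> V \<and> x \<noteq> y}.
       ereal ((nuQ p Q (fst xy - snd xy + h *\<^sub>R (F (fst xy) - F (snd xy)))
               / nuQ p Q (fst xy - snd xy) - 1) / h))"
  proof (rule key[where Cu=Cu and Cl="\<Sum>i\<in>UNIV. 1 / Q $ i $ i"])
    show "\<And>x y. nuQ p Q (x + y) \<le> nuQ p Q x + nuQ p Q y" by (rule nuQ_tri[OF p1 diag qpos])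
    show "\<And>c x. nuQ p Q (c *\<^sub>R x) = \<bar>c\<bar> * nuQ p Q x" by (rule nuQ_scale[OF p1 diag qpos])
    show "\<And>x. 0 \<le> nuQ p Q x" by (rule nuQ_nonneg[OF p1 diag qpos])
    show "\<And>x. x \<noteq> 0 \<Longrightarrow> 0 < nuQ p Q x" by (rule nuQ_pos[OF p1 diag qpos])
    show "\<And>x. nuQ p Q x \<le> Cu * norm x" by (rule Cu(2))
    show "0 \<le> Cu" by (rule Cu(1))
    show "\<And>x. norm x \<le> (\<Sum>i\<in>UNIV. 1 / Q $ i $ i) * nuQ p Q x" by (rule nuQ_lower[OF p1 diag qpos])
    show "0 \<le> (\<Sum>i\<in>UNIV. 1 / Q $ i $ i)" by (rule Cl)
    show "\<And>u. u \<in> Yspace \<Omega> V \<Longrightarrow> continuous_on (closure \<Omega>) u \<and> (\<forall>\<omega>\<in>closure \<Omega>. u \<omega> \<in> V)"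
      using Yspace_props by blast
  qed (use N_tri N_dom N_pos in auto)
  show ?thesis
    unfolding M_plus_YX_def M_pQ_def using K by (simp add: nuQ_def[OF p1 diag qpos])
qed


end
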